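(* Fix integers $n,d\ge 1$, constants $0<h_{min}<h_{max}$, any initial state $\mathcal{X}^{(0)}\in\mathbb{R}^{dn}$, an initial bandwidth $h_1\in[h_{min},h_{max}]$, and a non-negative sequence $(\nu_k)$ with $\nu_k\to 0$. Let $(\mathcal{X}^{(k)},h_k,i_k)$ be generated by the Doubly Stochastic Mean-Shift (DSMS) process described in the context. Then almost surely $$\nabla_{\mathbf{x}_{i_k}}L_{h_{k+1}}(\mathcal{X}^{(k)})\longrightarrow \mathbf{0}\quad\text{as }k\to\infty,$$ where $\nabla_{\mathbf{x}_i}L_h$ denotes the partial gradient of $L_h$ with respect to the block variable $\mathbf{x}_i\in\mathbb{R}^d$.
   Context: A profile function is a map $k:[0,\infty)\to\mathbb{R}_+$ that vanishes on $[1,\infty)$, is $C^1$, non-increasing and convex, with $k'(t)<0$ for all $t\in[0,1)$. The associated kernel on $\mathbb{R}^d$ is $K(\mathbf{u})=k(\|\mathbf{u}\|^2)$ and the weight function is $G(\mathbf{u})=-k'(\|\mathbf{u}\|^2)\ge 0$; $\|\cdot\|$ is the Euclidean norm. A state is $\mathcal{X}=[\mathbf{x}_1,\ldots,\mathbf{x}_n]\in\mathbb{R}^{dn}$ with $\mathbf{x}_i\in\mathbb{R}^d$. For $h>0$ define $L_h(\mathcal{X})=\sum_{1\le i\le j\le n}K\big((\mathbf{x}_i-\mathbf{x}_j)/h\big)$ and the mean-shift operator $$\mathcal{S}_h(x;\mathcal{X})=\frac{\sum_{i=1}^n G\big((x-\mathbf{x}_i)/h\big)\,\mathbf{x}_i}{\sum_{i=1}^n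 G\big((x-\mathbf{x}_i)/h\big)},\quad x\in\mathbb{R}^d.$$ DSMS process: given $\mathcal{X}^{(0)}$, $h_1\in[h_{min},h_{max}]$ and $(\nu_k)$, for $k=0,1,2,\ldots$: if $k\ge1$, set $\delta_k=\min\{\nu_k,\ (h_k/h_{min})^2-1,\ 1-(h_k/h_{max})^2\}$, draw $\alpha_k$ uniformly on $(1-\delta_k,1+\delta_k)$ (with $\alpha_k=1$ if $\delta_k=0$), and set $h_{k+1}=h_k/\sqrt{\alpha_k}$; draw an index $i_k$ uniformly from $\{1,\ldots,n\}$; then set $\mathbf{x}_{i_k}^{(k+1)}=\mathcal{S}_{h_{k+1}}(\mathbf{x}_{i_k}^{(k)};\mathcal{X}^{(k)})$ and $\mathbf{x}_j^{(k+1)}=\mathbf{x}_j^{(k)}$ for $j\ne i_k$. The indices $i_k$ are i.i.d., independent of all previous choices, and the sequences $(i_k)$ and $(h_k)$ are independent. *)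

theory Defs
  imports "HOL-Probability.Probability"
begin

definition is_profile :: "(real \<Rightarrow> real) \<Rightarrow> (real \<Rightarrow> real) \<Rightarrow> bool" where
  "is_profile k kp \<longleftrightarrow>
     (\<forall>t\<ge>0. k t \<ge> 0) \<and>
     (\<forall>t\<ge>1. k t = 0) \<and>
     (\<forall>t\<ge>0. (k has_real_derivative kp t) (at t within {0..})) \<and>
     continuous_on {0..} kp \<and>
     (\<forall>s t. 0 \<le> s \<longrightarrow> s \<le> t \<longrightarrow> k t \<le> k s) \<and>
     convex_on {0..} k \<and>
     (\<forall>t. 0 \<le> t \<longrightarrow> t < 1 \<longrightarrow> kp t < 0)"

definition Kern :: "(real \<Rightarrow> real) \<Rightarrow> 'a::real_normed_vector \<Rightarrow> real" where
  "Kern k u = k ((norm u)\<^sup>2)"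

definition Gw :: "(real \<Rightarrow> real) \<Rightarrow> 'a::real_normed_vector \<Rightarrow> real" where
  "Gw kp u = - kp ((norm u)\<^sup>2)"

definition Lh :: "(real \<Rightarrow> real) \<Rightarrow> nat \<Rightarrow> real \<Rightarrow> (nat \<Rightarrow> 'a::real_normed_vector) \<Rightarrow> real" where
  "Lh k n h X = (\<Sum>i<n. \<Sum>j\<in>{i..<n}. Kern k ((X i - X j) /\<^sub>R h))"

definition mean_shift :: "(real \<Rightarrow> real) \<Rightarrow> nat \<Rightarrow> real \<Rightarrow> (nat \<Rightarrow> 'a::real_normed_vector) \<Rightarrow> 'a \<Rightarrow> 'a" where
  "mean_shift kp n h X x =
     (\<Sum>i<n. Gw kp ((x - X i) /\<^sub>R h) *\<^sub>R X i) /\<^sub>R (\<Sum>i<n. Gw kp ((x - X i) /\<^sub>R h))"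

text \<open>dsms_h ... k = h_{k+1}. The uniform draw alpha_k on (1-delta_k,1+delta_k) is realised
  as 1 + delta_k (2 u_k - 1) with u_k uniform on (0,1).\<close>
fun dsms_h :: "real \<Rightarrow> real \<Rightarrow> (nat \<Rightarrow> real) \<Rightarrow> real \<Rightarrow> (nat \<Rightarrow> real) \<Rightarrow> nat \<Rightarrow> real" where
  "dsms_h hmin hmax nu h1 u 0 = h1"
| "dsms_h hmin hmax nu h1 u (Suc k) =
     (let h = dsms_h hmin hmax nu h1 u k;
          \<delta> = min (nu (Suc k)) (min ((h / hmin)\<^sup>2 - 1) (1 - (h / hmax)\<^sup>2));
          \<alpha> = 1 + \<delta> * (2 * u (Suc k) - 1)
      in h / sqrt \<alpha>)"

text \<open>dsms_X ... k = X^(k); step k uses bandwidth hs k = h_{k+1} and index idx k = i_k.\<close>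
fun dsms_X :: "(real \<Rightarrow> real) \<Rightarrow> nat \<Rightarrow> (nat \<Rightarrow> real) \<Rightarrow> (nat \<Rightarrow> nat) \<Rightarrow> (nat \<Rightarrow> 'a::real_normed_vector)
                 \<Rightarrow> nat \<Rightarrow> (nat \<Rightarrow> 'a)" where
  "dsms_X kp n hs idx X0 0 = X0"
| "dsms_X kp n hs idx X0 (Suc k) =
     (let Y = dsms_X kp n hs idx X0 k; i = idx k
      in Y(i := mean_shift kp n (hs k) Y (Y i)))"

end

theory Submission
  imports Defs
begin


lemma prof_tangent:
  assumes P: "is_profile k kp" and c: "0 \<le> c" and x: "0 \<le> x"
  shows "k x - k c \<ge> kp c * (x - c)"
proof (cases x c rule: linorder_cases)
  case less
  then have c0: "c \<in> interior {0::real..}" using x by auto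
  show ?thesis
  proof (rule convex_on_imp_above_tangent[where A="{0..}"])
    show "convex_on {0..} k" using P unfolding is_profile_def by blast
    show "(k has_real_derivative kp c) (at c within {0..})" using P c unfolding is_profile_def by blast
  qed (use c0 x in auto)
next
  case equal then show ?thesis by simp
next
  case greater
  have cv: "convex_on {0..} k" and D: "(k has_real_derivative kp c) (at c within {0..})"
    using P c unfolding is_profile_def by auto
  have "((\<lambda>y. (k y - k c) / (y - c)) \<longlongrightarrow> kp c) (at c within {0..})"
    using D unfolding has_field_derivative_iff .
  then have T: "((\<lambda>y. (k y - k c) / (y - c)) \<longlongrightarrow> kp c) (at_right c)"
  proof -
    have sub: "{c<..} \<subseteq> {0::real..}" using c by auto
    show ?thesis using tendsto_mono[OF at_le[OF sub] \<open>((\<lambda>y. (k y - k c) / (y - c)) \<longlongrightarrow> kp c) (at c within {0..})\<close>] .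
  qed
  have E: "eventually (\<lambda>y. (k y - k c) / (y - c) \<le> (k x - k c) / (x - c)) (at_right c)"
    using eventually_at_right_real[OF greater]
  proof eventually_elim
    fix y assume y: "y \<in> {c<..<x}"
    define t where "t = (y - c) / (x - c)"
    have t01: "0 \<le> t" "t \<le> 1" using y greater by (auto simp: t_def field_simps)
    have tt: "t * (x - c) = y - c" using greater by (simp add: t_def)
    have yy: "y = (1 - t) * c + t * x" using tt by (simp add: algebra_simps)
    have "k y \<le> (1 - t) * k c + t * k x"
      unfolding yy using convex_onD[OF cv t01] c x by auto
    then have "k y - k c \<le> t * (k x - k c)" by (simp add: algebra_simps)
    then show "(k y - k c) / (y - c) \<le> (k x - k c) / (x - c)"
      using y greater by (simp add: t_def field_simps)
  qed
  have "kp c \<le> (k x - k c) / (x - c)"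
    by (rule tendsto_upperbound[OF T E]) simp
  then show ?thesis using greater by (simp add: field_simps)
qed

lemma kp_nonpos:
  assumes P: "is_profile k kp" and t: "0 \<le> t" shows "kp t \<le> 0"
proof -
  have "k (t+1) - k t \<ge> kp t * 1" using prof_tangent[OF P t, of "t+1"] t by simp
  moreover have "k (t+1) \<le> k t" using P t unfolding is_profile_def by auto
  ultimately show ?thesis by simp
qed

lemma kp_mono:
  assumes P: "is_profile k kp" and "0 \<le> s" "s \<le> t" shows "kp s \<le> kp t"
proof (cases "s = t")
  case False
  have 1: "k t - k s \<ge> kp s * (t - s)" using prof_tangent[OF P, of s t] assms by simp
  have 2: "k s - k t \<ge> kp t * (s - t)" using prof_tangent[OF P, of t s] assms by simp
  have "(kp s - kp t) * (t - s) \<le> 0" using 1 2 by (simp add: algebra_simps)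
  then show ?thesis using assms False by (simp add: mult_le_0_iff)
qed simp

lemma k_bounds:
  assumes P: "is_profile k kp" and t: "0 \<le> t" shows "0 \<le> k t" "k t \<le> k 0"
  using P t unfolding is_profile_def by auto

lemma k_cont: assumes P: "is_profile k kp" shows "continuous_on {0..} k"
proof -
  have "\<forall>t\<in>{0..}. (k has_real_derivative kp t) (at t within {0..})"
    using P unfolding is_profile_def by auto
  then show ?thesis
    unfolding continuous_on_eq_continuous_within by (metis DERIV_continuous)
qed

lemma k_max_cont: assumes P: "is_profile k kp" shows "continuous_on UNIV (\<lambda>t. k (max 0 t))"
proof (rule continuous_on_compose2[OF k_cont[OF P]])
  show "continuous_on UNIV (max (0::real))" by (intro continuous_intros)
qed auto

lemma kp_max_cont: assumes P: "is_profile k kp" shows "continuous_on UNIV (\<lambda>t. kp (max 0 t))"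
proof (rule continuous_on_compose2[of "{0..}" kp])
  show "continuous_on {0..} kp" using P by (simp add: is_profile_def)
  show "continuous_on UNIV (max (0::real))" by (intro continuous_intros)
qed auto

lemma k_meas: assumes P: "is_profile k kp" shows "(\<lambda>t. k (max 0 t)) \<in> borel_measurable borel"
  using k_max_cont[OF P] by (rule borel_measurable_continuous_onI)

lemma kp_meas: assumes P: "is_profile k kp" shows "(\<lambda>t. kp (max 0 t)) \<in> borel_measurable borel"
  using kp_max_cont[OF P] by (rule borel_measurable_continuous_onI)




lemma tri_sum:
  fixes s :: "nat \<Rightarrow> nat \<Rightarrow> real"
  assumes sym: "\<And>a b. s a b = s b a"
  shows "(\<Sum>a<n. \<Sum>b\<in>{a..<n}. s a b) = ((\<Sum>a<n. \<Sum>b<n. s a b) + (\<Sum>a<n. s a a)) / 2"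
proof (induction n)
  case (Suc n)
  have L: "(\<Sum>a<Suc n. \<Sum>b\<in>{a..<Suc n}. s a b) = (\<Sum>a<n. \<Sum>b\<in>{a..<n}. s a b) + (\<Sum>a<n. s a n) + s n n"
    by (simp add: sum.distrib)
  have R: "(\<Sum>a<Suc n. \<Sum>b<Suc n. s a b) = (\<Sum>a<n. \<Sum>b<n. s a b) + (\<Sum>a<n. s a n) + (\<Sum>b<n. s n b) + s n n"
    by (simp add: sum.distrib)
  have "(\<Sum>b<n. s n b) = (\<Sum>a<n. s a n)" using sym by simp
  then show ?case using L R Suc by simp
qed simp

lemma Kern_minus: "Kern k (- u) = Kern k u" by (simp add: Kern_def)
lemma Kern_zero: "Kern k 0 = k 0" by (simp add: Kern_def)

lemma Lh_sym: "Lh k n h Z = ((\<Sum>a<n. \<Sum>b<n. Kern k ((Z a - Z b) /\<^sub>R h)) + real n * k 0) / 2"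
proof -
  have "Lh k n h Z = ((\<Sum>a<n. \<Sum>b<n. Kern k ((Z a - Z b) /\<^sub>R h)) + (\<Sum>a<n. Kern k ((Z a - Z a) /\<^sub>R h))) / 2"
    unfolding Lh_def
  proof (rule tri_sum)
    fix a b
    have "(Z a - Z b) /\<^sub>R h = - ((Z b - Z a) /\<^sub>R h)" by (simp add: algebra_simps)
    then show "Kern k ((Z a - Z b) /\<^sub>R h) = Kern k ((Z b - Z a) /\<^sub>R h)" by (simp add: Kern_minus)
  qed
  then show ?thesis by (simp add: Kern_zero)
qed

definition Qc :: "(real \<Rightarrow> real) \<Rightarrow> nat \<Rightarrow> real \<Rightarrow> (nat \<Rightarrow> 'a::real_normed_vector) \<Rightarrow> nat \<Rightarrow> real" where
  "Qc k n h X i = ((\<Sum>a\<in>{..<n}-{i}. \<Sum>b\<in>{..<n}-{i}. Kern k ((X a - X b) /\<^sub>R h)) + k 0 + real n * k 0) / 2"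

lemma Lh_split:
  assumes i: "i < n"
  shows "Lh k n h (X(i:=y)) = Qc k n h X i + (\<Sum>b\<in>{..<n}-{i}. Kern k ((y - X b) /\<^sub>R h))"
proof -
  let ?Z = "X(i:=y)"
  let ?S = "\<Sum>b\<in>{..<n}-{i}. Kern k ((y - X b) /\<^sub>R h)"
  have fin: "finite ({..<n}-{i})" by simp
  have iin: "i \<in> {..<n}" using i by simp
  have row: "\<And>a. (\<Sum>b<n. Kern k ((?Z a - ?Z b) /\<^sub>R h)) = Kern k ((?Z a - y) /\<^sub>R h) + (\<Sum>b\<in>{..<n}-{i}. Kern k ((?Z a - X b) /\<^sub>R h))"
    by (subst sum.remove[OF _ iin]) auto
  have T: "(\<Sum>a<n. \<Sum>b<n. Kern k ((?Z a - ?Z b) /\<^sub>R h)) =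
      (\<Sum>a<n. Kern k ((?Z a - y) /\<^sub>R h)) + (\<Sum>a<n. \<Sum>b\<in>{..<n}-{i}. Kern k ((?Z a - X b) /\<^sub>R h))"
    by (simp only: row sum.distrib)
  have T1: "(\<Sum>a<n. Kern k ((?Z a - y) /\<^sub>R h)) = k 0 + ?S"
  proof -
    have "(\<Sum>a<n. Kern k ((?Z a - y) /\<^sub>R h)) = Kern k ((?Z i - y) /\<^sub>R h) + (\<Sum>a\<in>{..<n}-{i}. Kern k ((?Z a - y) /\<^sub>R h))"
      by (subst sum.remove[OF _ iin]) auto
    also have "(\<Sum>a\<in>{..<n}-{i}. Kern k ((?Z a - y) /\<^sub>R h)) = ?S"
    proof (rule sum.cong)
      fix a assume "a \<in> {..<n}-{i}"
      then have "(?Z a - y) /\<^sub>R h = - ((y - X a) /\<^sub>R h)" by (auto simp: algebra_simps)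
      then show "Kern k ((?Z a - y) /\<^sub>R h) = Kern k ((y - X a) /\<^sub>R h)" by (simp add: Kern_minus)
    qed simp
    finally show ?thesis by (simp add: Kern_zero)
  qed
  have T2: "(\<Sum>a<n. \<Sum>b\<in>{..<n}-{i}. Kern k ((?Z a - X b) /\<^sub>R h)) =
      ?S + (\<Sum>a\<in>{..<n}-{i}. \<Sum>b\<in>{..<n}-{i}. Kern k ((X a - X b) /\<^sub>R h))"
    by (subst sum.remove[OF _ iin]) auto
  show ?thesis
    unfolding Lh_sym[of k n h ?Z] T T1 T2 Qc_def by (simp add: field_simps)
qed

lemma kern_shift_deriv:
  assumes P: "is_profile k kp"
  shows "((\<lambda>y. Kern k ((y - c) /\<^sub>R h)) has_derivative
     (\<lambda>v. kp ((norm ((x - c) /\<^sub>R h))\<^sup>2) * (2 * (((x - c) /\<^sub>R h) \<bullet> (v /\<^sub>R h))))) (at x)"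
proof -
  let ?f = "\<lambda>y. ((y - c) /\<^sub>R h) \<bullet> ((y - c) /\<^sub>R h)"
  have fd0: "(?f has_derivative (\<lambda>v. (v /\<^sub>R h) \<bullet> ((x - c) /\<^sub>R h) + ((x - c) /\<^sub>R h) \<bullet> (v /\<^sub>R h))) (at x within UNIV)"
    by (auto intro!: derivative_eq_intros simp: algebra_simps)
  have eqd: "(\<lambda>v. (v /\<^sub>R h) \<bullet> ((x - c) /\<^sub>R h) + ((x - c) /\<^sub>R h) \<bullet> (v /\<^sub>R h)) = (\<lambda>v. 2 * (((x - c) /\<^sub>R h) \<bullet> (v /\<^sub>R h)))"
    by (simp add: fun_eq_iff inner_commute)
  have fd: "(?f has_derivative (\<lambda>v. 2 * (((x - c) /\<^sub>R h) \<bullet> (v /\<^sub>R h)))) (at x within UNIV)"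
    using fd0 unfolding eqd .
  have kd: "\<And>t. t \<in> {0..} \<Longrightarrow> (k has_derivative (*) (kp t)) (at t within {0..})"
    using P unfolding is_profile_def by (auto intro: has_field_derivative_imp_has_derivative)
  have "((\<lambda>y. k (?f y)) has_derivative (\<lambda>v. kp (?f x) * (2 * (((x - c) /\<^sub>R h) \<bullet> (v /\<^sub>R h))))) (at x within UNIV)"
  proof (rule has_derivative_in_compose2[OF kd _ _ fd])
    have "\<forall>y. 0 \<le> ?f y" by (intro allI inner_ge_zero)
    then show "?f ` UNIV \<subseteq> {0..}" by auto
  qed auto
  then show ?thesis
    unfolding Kern_def power2_norm_eq_inner by simp
qed

lemma aux_inner: "(a::real) * (2 * ((u /\<^sub>R h) \<bullet> (v /\<^sub>R h))) = (2 / h\<^sup>2) * (v \<bullet> (a *\<^sub>R u))"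
  for u v :: "'a::real_inner"
  by (simp add: inner_commute power2_eq_square divide_inverse)

definition gradL :: "(real \<Rightarrow> real) \<Rightarrow> nat \<Rightarrow> real \<Rightarrow> (nat \<Rightarrow> 'a::real_inner) \<Rightarrow> nat \<Rightarrow> 'a" where
  "gradL kp n h X i = (2 / h\<^sup>2) *\<^sub>R (\<Sum>j<n. kp ((norm ((X i - X j) /\<^sub>R h))\<^sup>2) *\<^sub>R (X i - X j))"

lemma Lh_gderiv:
  fixes X :: "nat \<Rightarrow> 'a::euclidean_space"
  assumes P: "is_profile k kp" and i: "i < n"
  shows "GDERIV (\<lambda>y. Lh k n h (X(i:=y))) (X i) :> gradL kp n h X i"
proof -
  have iin: "i \<in> {..<n}" using i by simp
  have eq: "(\<lambda>y. Lh k n h (X(i:=y))) = (\<lambda>y. (\<Sum>b\<in>{..<n}-{i}. Kern k ((y - X b) /\<^sub>R h)) + Qc k n h X i)"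
    by (rule ext, subst Lh_split[OF i], simp)
  let ?F = "\<lambda>b v. kp ((norm ((X i - X b) /\<^sub>R h))\<^sup>2) * (2 * (((X i - X b) /\<^sub>R h) \<bullet> (v /\<^sub>R h)))"
  have D: "((\<lambda>y. (\<Sum>b\<in>{..<n}-{i}. Kern k ((y - X b) /\<^sub>R h)) + Qc k n h X i) has_derivative
           (\<lambda>v. \<Sum>b\<in>{..<n}-{i}. ?F b v)) (at (X i))"
    by (intro has_derivative_add_const has_derivative_sum kern_shift_deriv[OF P])
  have F2: "(\<lambda>v. \<Sum>b\<in>{..<n}-{i}. ?F b v) = (\<lambda>v. v \<bullet> gradL kp n h X i)"
  proof
    fix v
    have "(\<Sum>b<n. ?F b v) = ?F i v + (\<Sum>b\<in>{..<n}-{i}. ?F b v)"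
      by (rule sum.remove[OF _ iin]) simp
    then have "(\<Sum>b\<in>{..<n}-{i}. ?F b v) = (\<Sum>b<n. ?F b v)" by simp
    also have "\<dots> = (\<Sum>b<n. (2 / h\<^sup>2) * (v \<bullet> (kp ((norm ((X i - X b) /\<^sub>R h))\<^sup>2) *\<^sub>R (X i - X b))))"
      by (rule sum.cong[OF refl]) (rule aux_inner)
    also have "\<dots> = v \<bullet> gradL kp n h X i"
      unfolding gradL_def inner_scaleR_right[of v "2 / h\<^sup>2"] inner_sum_right sum_distrib_left ..
    finally show "(\<Sum>b\<in>{..<n}-{i}. ?F b v) = v \<bullet> gradL kp n h X i" .
  qed
  show ?thesis unfolding eq gderiv_def using D unfolding F2 .
qed

lemma ms_identity:
  fixes X :: "nat \<Rightarrow> 'a::real_inner" and G :: "nat \<Rightarrow> real"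
  assumes W: "(\<Sum>b<n. G b) \<noteq> 0" and x': "x' = (\<Sum>b<n. G b *\<^sub>R X b) /\<^sub>R (\<Sum>b<n. G b)"
  shows "(\<Sum>b<n. G b * ((norm (p - X b))\<^sup>2 - (norm (x' - X b))\<^sup>2)) = (\<Sum>b<n. G b) * (norm (p - x'))\<^sup>2"
proof -
  let ?W = "\<Sum>b<n. G b"
  have e1: "\<And>b. (norm (p - X b))\<^sup>2 - (norm (x' - X b))\<^sup>2 = p \<bullet> p - x' \<bullet> x' - 2 * ((p - x') \<bullet> X b)"
    by (simp add: power2_norm_eq_inner inner_diff_left inner_diff_right inner_commute algebra_simps)
  have sx: "(\<Sum>b<n. G b *\<^sub>R X b) = ?W *\<^sub>R x'" using W x' by simp
  have "(\<Sum>b<n. G b * ((norm (p - X b))\<^sup>2 - (norm (x' - X b))\<^sup>2))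
        = (\<Sum>b<n. G b * (p \<bullet> p - x' \<bullet> x') - 2 * ((p - x') \<bullet> (G b *\<^sub>R X b)))"
    by (simp add: e1 algebra_simps)
  also have "\<dots> = ?W * (p \<bullet> p - x' \<bullet> x') - 2 * ((p - x') \<bullet> (\<Sum>b<n. G b *\<^sub>R X b))"
    by (simp add: sum_subtractf sum_distrib_left sum_distrib_right inner_sum_right)
  also have "\<dots> = ?W * (norm (p - x'))\<^sup>2"
    unfolding sx by (simp add: power2_norm_eq_inner inner_diff_left inner_diff_right inner_commute algebra_simps)
  finally show ?thesis .
qed


lemma norm_div_sq: "(norm (u /\<^sub>R h))\<^sup>2 = (norm u)\<^sup>2 / h\<^sup>2"
proof -
  have "norm (u /\<^sub>R h) = norm u / \<bar>h\<bar>" by (simp add: divide_inverse mult.commute)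
  then show ?thesis by (simp add: power_divide)
qed

lemma gain_facts:
  fixes X :: "nat \<Rightarrow> 'a::euclidean_space"
  assumes P: "is_profile k kp" and i: "i < n" and h: "h \<noteq> 0"
  defines "W \<equiv> \<Sum>j<n. Gw kp ((X i - X j) /\<^sub>R h)"
    and "x' \<equiv> mean_shift kp n h X (X i)"
  shows "W * (norm (x' - X i))\<^sup>2 / h\<^sup>2 \<le> Lh k n h (X(i:=x')) - Lh k n h X"
    and "0 < W" and "W \<le> real n * (- kp 0)"
    and "gradL kp n h X i = (2 / h\<^sup>2) *\<^sub>R (W *\<^sub>R (x' - X i))"
proof -
  define G where "G b = Gw kp ((X i - X b) /\<^sub>R h)" for b
  have iin: "i \<in> {..<n}" using i by simp
  have G0: "\<And>b. 0 \<le> G b" using kp_nonpos[OF P] by (simp add: G_def Gw_def)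
  have G1: "\<And>b. G b \<le> - kp 0" using kp_mono[OF P] by (simp add: G_def Gw_def)
  have Gi: "G i = - kp 0" by (simp add: G_def Gw_def)
  have kp0: "kp 0 < 0" using P unfolding is_profile_def by auto
  have Wdef: "W = (\<Sum>b<n. G b)" by (simp add: W_def G_def)
  have Wsplit: "W = G i + (\<Sum>b\<in>{..<n}-{i}. G b)" unfolding Wdef by (rule sum.remove[OF _ iin]) simp
  have "0 \<le> (\<Sum>b\<in>{..<n}-{i}. G b)" using G0 by (simp add: sum_nonneg)
  then show Wpos: "0 < W" using Wsplit Gi kp0 by simp
  have "W \<le> (\<Sum>b<n. - kp 0)" unfolding Wdef by (rule sum_mono) (rule G1)
  then show "W \<le> real n * (- kp 0)" by simp
  have xd: "x' = (\<Sum>b<n. G b *\<^sub>R X b) /\<^sub>R W"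
    by (simp add: x'_def mean_shift_def G_def W_def)
  have sx: "(\<Sum>b<n. G b *\<^sub>R X b) = W *\<^sub>R x'" using xd Wpos by simp
  show "gradL kp n h X i = (2 / h\<^sup>2) *\<^sub>R (W *\<^sub>R (x' - X i))"
  proof -
    have "(\<Sum>j<n. kp ((norm ((X i - X j) /\<^sub>R h))\<^sup>2) *\<^sub>R (X i - X j)) = (\<Sum>j<n. G j *\<^sub>R X j - G j *\<^sub>R X i)"
      by (rule sum.cong[OF refl]) (simp add: G_def Gw_def algebra_simps)
    also have "\<dots> = W *\<^sub>R (x' - X i)"
      by (simp add: sum_subtractf sx Wdef scaleR_sum_left[symmetric] algebra_simps)
    finally show ?thesis by (simp add: gradL_def)
  qed
  let ?K = "\<lambda>y b. Kern k ((y - X b) /\<^sub>R h)"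
  define D where "D b = G b * ((norm (X i - X b))\<^sup>2 - (norm (x' - X b))\<^sup>2) / h\<^sup>2" for b
  have diff: "Lh k n h (X(i:=x')) - Lh k n h X = (\<Sum>b\<in>{..<n}-{i}. ?K x' b - ?K (X i) b)"
  proof -
    have a: "Lh k n h (X(i:=x')) = Qc k n h X i + (\<Sum>b\<in>{..<n}-{i}. ?K x' b)" by (rule Lh_split[OF i])
    have b: "Lh k n h (X(i:=X i)) = Qc k n h X i + (\<Sum>b\<in>{..<n}-{i}. ?K (X i) b)" by (rule Lh_split[OF i])
    then have b': "Lh k n h X = Qc k n h X i + (\<Sum>b\<in>{..<n}-{i}. ?K (X i) b)" by simp
    show ?thesis unfolding a b' by (simp add: sum_subtractf)
  qed
  have termb: "D b \<le> ?K x' b - ?K (X i) b" for b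
  proof -
    have t: "k ((norm ((x' - X b) /\<^sub>R h))\<^sup>2) - k ((norm ((X i - X b) /\<^sub>R h))\<^sup>2)
        \<ge> kp ((norm ((X i - X b) /\<^sub>R h))\<^sup>2) * ((norm ((x' - X b) /\<^sub>R h))\<^sup>2 - (norm ((X i - X b) /\<^sub>R h))\<^sup>2)"
      by (rule prof_tangent[OF P]) auto
    have "kp ((norm ((X i - X b) /\<^sub>R h))\<^sup>2) = - G b" by (simp add: G_def Gw_def)
    then show ?thesis using t unfolding Kern_def D_def norm_div_sq
      by (simp add: algebra_simps diff_divide_distrib)
  qed
  have "(\<Sum>b\<in>{..<n}-{i}. D b) \<le> (\<Sum>b\<in>{..<n}-{i}. ?K x' b - ?K (X i) b)"
    by (rule sum_mono) (rule termb)
  moreover have "(\<Sum>b<n. D b) \<le> (\<Sum>b\<in>{..<n}-{i}. D b)"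
  proof -
    have "(\<Sum>b<n. D b) = D i + (\<Sum>b\<in>{..<n}-{i}. D b)" by (rule sum.remove[OF _ iin]) simp
    moreover have "D i \<le> 0" using G0[of i] by (simp add: D_def divide_nonpos_pos mult_nonneg_nonpos)
    ultimately show ?thesis by simp
  qed
  moreover have "(\<Sum>b<n. D b) = W * (norm (x' - X i))\<^sup>2 / h\<^sup>2"
  proof -
    have "(\<Sum>b<n. D b) = (\<Sum>b<n. G b * ((norm (X i - X b))\<^sup>2 - (norm (x' - X b))\<^sup>2)) / h\<^sup>2"
      by (simp add: D_def sum_divide_distrib)
    also have "\<dots> = W * (norm (X i - x'))\<^sup>2 / h\<^sup>2"
      using ms_identity[where G=G and x'=x' and X=X and p="X i" and n=n] xd Wpos Wdef by simp
    finally show ?thesis by (simp add: norm_minus_commute)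
  qed
  ultimately show "W * (norm (x' - X i))\<^sup>2 / h\<^sup>2 \<le> Lh k n h (X(i:=x')) - Lh k n h X"
    using diff by linarith
qed

lemma grad_bound:
  fixes X :: "nat \<Rightarrow> 'a::euclidean_space"
  assumes P: "is_profile k kp" and i: "i < n" and h: "h \<noteq> 0"
  shows "(norm (gradL kp n h X i))\<^sup>2 \<le> (4 * real n * (- kp 0) / h\<^sup>2) *
           (Lh k n h (X(i:=mean_shift kp n h X (X i))) - Lh k n h X)"
    and "0 \<le> Lh k n h (X(i:=mean_shift kp n h X (X i))) - Lh k n h X"
proof -
  define W where "W = (\<Sum>j<n. Gw kp ((X i - X j) /\<^sub>R h))"
  define x' where "x' = mean_shift kp n h X (X i)"
  define g where "g = Lh k n h (X(i:=x')) - Lh k n h X"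
  define d where "d = (norm (x' - X i))\<^sup>2"
  have f1: "W * d / h\<^sup>2 \<le> g" and f2: "0 < W" and f3: "W \<le> real n * (- kp 0)"
    and f4: "gradL kp n h X i = (2 / h\<^sup>2) *\<^sub>R (W *\<^sub>R (x' - X i))"
    using gain_facts[OF P i h, where X=X] unfolding W_def x'_def g_def d_def by auto
  have h2: "0 < h\<^sup>2" using h by simp
  have d0: "0 \<le> d" by (simp add: d_def)
  have g0: "0 \<le> g" using f1 f2 d0 h2 by (meson divide_nonneg_pos dual_order.trans less_le mult_nonneg_nonneg)
  then show "0 \<le> Lh k n h (X(i:=mean_shift kp n h X (X i))) - Lh k n h X" by (simp add: g_def x'_def)
  have "(norm (gradL kp n h X i))\<^sup>2 = (4 * W / h\<^sup>2) * (W * d / h\<^sup>2)"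
  proof -
    have "norm (gradL kp n h X i) = (2 / h\<^sup>2) * W * norm (x' - X i)"
      unfolding f4 using f2 h2 by simp
    then show ?thesis unfolding d_def by (simp add: power2_eq_square field_simps)
  qed
  also have "\<dots> \<le> (4 * W / h\<^sup>2) * g" using f1 f2 h2 by (intro mult_left_mono) auto
  also have "\<dots> \<le> (4 * real n * (- kp 0) / h\<^sup>2) * g"
    using f3 g0 h2 by (intro mult_right_mono divide_right_mono) auto
  finally show "(norm (gradL kp n h X i))\<^sup>2 \<le> (4 * real n * (- kp 0) / h\<^sup>2) *
           (Lh k n h (X(i:=mean_shift kp n h X (X i))) - Lh k n h X)" by (simp add: g_def x'_def)
qed




lemma Gw_alt: "Gw kp u = - (\<lambda>t. kp (max 0 t)) ((norm u)\<^sup>2)"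
  by (simp add: Gw_def)

lemma Kern_alt: "Kern k u = (\<lambda>t. k (max 0 t)) ((norm u)\<^sup>2)"
  by (simp add: Kern_def)

lemma meas_dsms_h:
  fixes N :: "'w measure"
  assumes "\<And>j. j \<le> m \<Longrightarrow> (\<lambda>\<omega>. uu \<omega> j) \<in> borel_measurable N"
  shows "(\<lambda>\<omega>. dsms_h hmin hmax nu h1 (uu \<omega>) m) \<in> borel_measurable N"
  using assms
proof (induction m)
  case 0 then show ?case by simp
next
  case (Suc m)
  have [measurable]: "(\<lambda>\<omega>. dsms_h hmin hmax nu h1 (uu \<omega>) m) \<in> borel_measurable N"
    using Suc by auto
  have [measurable]: "(\<lambda>\<omega>. uu \<omega> (Suc m)) \<in> borel_measurable N" using Suc by auto
  show ?case unfolding dsms_h.simps Let_def by measurable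
qed

lemma meas_mean_shift:
  fixes N :: "'w measure" and Y :: "'w \<Rightarrow> nat \<Rightarrow> 'a::euclidean_space"
  assumes P: "is_profile k kp"
    and [measurable]: "\<And>i. (\<lambda>\<omega>. Y \<omega> i) \<in> borel_measurable N"
    and [measurable]: "hh \<in> borel_measurable N" "xx \<in> borel_measurable N"
  shows "(\<lambda>\<omega>. mean_shift kp n (hh \<omega>) (Y \<omega>) (xx \<omega>)) \<in> borel_measurable N"
proof -
  note [measurable] = kp_meas[OF P]
  show ?thesis unfolding mean_shift_def Gw_alt by measurable
qed

lemma meas_Lh:
  fixes N :: "'w measure" and Y :: "'w \<Rightarrow> nat \<Rightarrow> 'a::euclidean_space"
  assumes P: "is_profile k kp"
    and [measurable]: "\<And>i. (\<lambda>\<omega>. Y \<omega> i) \<in> borel_measurable N"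
    and [measurable]: "hh \<in> borel_measurable N"
  shows "(\<lambda>\<omega>. Lh k n (hh \<omega>) (Y \<omega>)) \<in> borel_measurable N"
proof -
  note [measurable] = k_meas[OF P]
  show ?thesis unfolding Lh_def Kern_alt by measurable
qed

lemma meas_dsms_X:
  fixes N :: "'w measure" and X0 :: "nat \<Rightarrow> 'a::euclidean_space"
  assumes P: "is_profile k kp"
    and H: "\<And>j. j < m \<Longrightarrow> (\<lambda>\<omega>. hh \<omega> j) \<in> borel_measurable N"
    and I: "\<And>j. j < m \<Longrightarrow> (\<lambda>\<omega>. ii \<omega> j) \<in> measurable N (count_space UNIV)"
  shows "(\<lambda>\<omega>. dsms_X kp n (hh \<omega>) (ii \<omega>) X0 m i) \<in> borel_measurable N"
  using H I
proof (induction m arbitrary: i)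
  case 0 then show ?case by simp
next
  case (Suc m)
  let ?Y = "\<lambda>\<omega>. dsms_X kp n (hh \<omega>) (ii \<omega>) X0 m"
  have Y[measurable]: "\<And>i. (\<lambda>\<omega>. ?Y \<omega> i) \<in> borel_measurable N"
    using Suc by auto
  have hm[measurable]: "(\<lambda>\<omega>. hh \<omega> m) \<in> borel_measurable N" using Suc by auto
  have im[measurable]: "(\<lambda>\<omega>. ii \<omega> m) \<in> measurable N (count_space UNIV)" using Suc by auto
  have Yi[measurable]: "(\<lambda>\<omega>. ?Y \<omega> (ii \<omega> m)) \<in> borel_measurable N"
    by (rule measurable_compose_countable[OF Y im])
  have ms[measurable]: "(\<lambda>\<omega>. mean_shift kp n (hh \<omega> m) (?Y \<omega>) (?Y \<omega> (ii \<omega> m))) \<in> borel_measurable N"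
    by (rule meas_mean_shift[OF P Y hm Yi])
  have eq: "(\<lambda>\<omega>. dsms_X kp n (hh \<omega>) (ii \<omega>) X0 (Suc m) i) =
     (\<lambda>\<omega>. if ii \<omega> m = i then mean_shift kp n (hh \<omega> m) (?Y \<omega>) (?Y \<omega> (ii \<omega> m)) else ?Y \<omega> i)"
    by (auto simp: Let_def)
  have pr[measurable]: "Measurable.pred N (\<lambda>\<omega>. ii \<omega> m = i)"
    using im by measurable
  show ?case unfolding eq by measurable
qed


lemma dsms_h_cong:
  "(\<And>j. j \<le> m \<Longrightarrow> u j = u' j) \<Longrightarrow> dsms_h hmin hmax nu h1 u m = dsms_h hmin hmax nu h1 u' m"
  by (induction m) (auto simp: Let_def)

lemma dsms_X_cong:
  "(\<And>j. j < m \<Longrightarrow> hs j = hs' j \<and> idx j = idx' j) \<Longrightarrow> dsms_X kp n hs idx X0 m = dsms_X kp n hs' idx' X0 m"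
  by (induction m) (auto simp: Let_def)

lemma step_range:
  fixes h hmin hmax \<nu> t :: real
  assumes "0 < hmin" "hmin < hmax" "hmin \<le> h" "h \<le> hmax" "0 \<le> \<nu>" "0 \<le> t" "t \<le> 1"
  defines "\<delta> \<equiv> min \<nu> (min ((h / hmin)\<^sup>2 - 1) (1 - (h / hmax)\<^sup>2))"
  shows "0 \<le> \<delta>" "\<delta> < 1" "(h / hmax)\<^sup>2 \<le> 1 + \<delta> * (2 * t - 1)" "1 + \<delta> * (2 * t - 1) \<le> (h / hmin)\<^sup>2"
    "hmin \<le> h / sqrt (1 + \<delta> * (2 * t - 1))" "h / sqrt (1 + \<delta> * (2 * t - 1)) \<le> hmax"
proof -
  have h0: "0 < h" using assms by simp
  have a: "1 \<le> (h / hmin)\<^sup>2" using assms by (simp add: le_divide_eq one_le_power)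
  have b: "(h / hmax)\<^sup>2 \<le> 1" using assms h0 by (simp add: power_le_one)
  have b0: "0 < (h / hmax)\<^sup>2" using h0 assms by simp
  show d0: "0 \<le> \<delta>" using a b assms by (simp add: \<delta>_def)
  have dle1: "\<delta> \<le> 1 - (h / hmax)\<^sup>2" "\<delta> \<le> (h / hmin)\<^sup>2 - 1" by (simp_all add: \<delta>_def)
  show "\<delta> < 1" using b0 dle1 by linarith
  have "- 1 \<le> 2 * t - 1" "2 * t - 1 \<le> 1" using assms by auto
  have q1: "\<delta> * (2 * t - 1) + \<delta> = 2 * (\<delta> * t)" by (simp add: algebra_simps)
  have q2: "\<delta> - \<delta> * (2 * t - 1) = 2 * (\<delta> * (1 - t))" by (simp add: algebra_simps)
  have p1: "0 \<le> \<delta> * t" using d0 assms by auto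
  have p2: "0 \<le> \<delta> * (1 - t)" using d0 assms by auto
  have r1: "- \<delta> \<le> \<delta> * (2 * t - 1)" using q1 p1 by linarith
  have r2: "\<delta> * (2 * t - 1) \<le> \<delta>" using q2 p2 by linarith
  note r = r1 r2
  show A1: "(h / hmax)\<^sup>2 \<le> 1 + \<delta> * (2 * t - 1)" using r dle1 by linarith
  show A2: "1 + \<delta> * (2 * t - 1) \<le> (h / hmin)\<^sup>2" using r dle1 by linarith
  let ?a = "1 + \<delta> * (2 * t - 1)"
  have s1: "h / hmax \<le> sqrt ?a" using A1 h0 assms by (simp add: real_le_rsqrt)
  have s2: "sqrt ?a \<le> h / hmin" using A2 h0 assms by (simp add: real_sqrt_le_iff real_le_lsqrt)
  have hp: "0 < h / hmax" using h0 assms by simp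
  show "hmin \<le> h / sqrt ?a"
  proof -
    have "0 < sqrt ?a" using s1 hp by linarith
    then show ?thesis using s2 assms h0 by (simp add: le_divide_eq field_simps)
  qed
  show "h / sqrt ?a \<le> hmax"
  proof -
    have "0 < sqrt ?a" using s1 hp by linarith
    then show ?thesis using s1 assms h0 by (simp add: divide_le_eq field_simps)
  qed
qed

lemma hs_range:
  assumes "0 < hmin" "hmin < hmax" "hmin \<le> h1" "h1 \<le> hmax" "\<And>j. 0 \<le> nu j"
    and "\<And>j. j \<le> m \<Longrightarrow> 0 \<le> u j \<and> u j \<le> 1"
  shows "hmin \<le> dsms_h hmin hmax nu h1 u m \<and> dsms_h hmin hmax nu h1 u m \<le> hmax"
  using assms(6)
proof (induction m)
  case 0 then show ?case using assms by simp
next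
  case (Suc m)
  then have IH: "hmin \<le> dsms_h hmin hmax nu h1 u m" "dsms_h hmin hmax nu h1 u m \<le> hmax" by auto
  have u: "0 \<le> u (Suc m)" "u (Suc m) \<le> 1" using Suc by auto
  show ?case
    using step_range(5,6)[OF assms(1,2) IH assms(5)[of "Suc m"] u] by (simp add: Let_def)
qed

lemma Lh_bounds:
  assumes P: "is_profile k kp"
  shows "0 \<le> Lh k n h Z" "Lh k n h Z \<le> real n * real n * k 0"
proof -
  have K: "\<And>u. 0 \<le> Kern k u \<and> Kern k u \<le> k 0" using k_bounds[OF P] by (simp add: Kern_def)
  show "0 \<le> Lh k n h Z" unfolding Lh_def using K by (intro sum_nonneg) auto
  have "Lh k n h Z \<le> (\<Sum>a<n. \<Sum>b<n. Kern k ((Z a - Z b) /\<^sub>R h))"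
    unfolding Lh_def using K by (intro sum_mono sum_mono2) auto
  also have "\<dots> \<le> (\<Sum>a<n. \<Sum>b<n. k 0)" using K by (intro sum_mono) auto
  finally show "Lh k n h Z \<le> real n * real n * k 0" by simp
qed

lemma convex_on_sumf:
  assumes "finite A" "convex S" "\<And>i. i \<in> A \<Longrightarrow> convex_on S (f i)"
  shows "convex_on S (\<lambda>x. \<Sum>i\<in>A. f i x)"
  using assms
proof (induction A rule: finite_induct)
  case empty then show ?case by (simp add: convex_on_const)
next
  case (insert a A) then show ?case by (simp add: convex_on_add)
qed

lemma convex_k_scale:
  assumes P: "is_profile k kp" and c: "0 \<le> c"
  shows "convex_on {0<..} (\<lambda>a. k (max 0 (a * c)))"
proof -
  have cv: "convex_on {0..} k" using P by (simp add: is_profile_def)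
  show ?thesis
  proof (rule convex_onI)
    fix t x y :: real assume t: "0 < t" "t < 1" and x: "x \<in> {0<..}" and y: "y \<in> {0<..}"
    have nn: "0 \<le> (1 - t) * (x * c) + t * (y * c)" using t x y c by simp
    have e0: "((1 - t) * x + t * y) * c = (1 - t) * (x * c) + t * (y * c)" by (simp add: algebra_simps)
    have e: "max 0 (((1 - t) * x + t * y) * c) = (1 - t) * (x * c) + t * (y * c)"
      unfolding e0 using nn by simp
    have "k ((1 - t) * (x * c) + t * (y * c)) \<le> (1 - t) * k (x * c) + t * k (y * c)"
      using convex_onD[OF cv, of t "x * c" "y * c"] t x y c by auto
    then show "k (max 0 (((1 - t) *\<^sub>R x + t *\<^sub>R y) * c)) \<le> (1 - t) * k (max 0 (x * c)) + t * k (max 0 (y * c))"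
      using x y c e by simp
  qed simp
qed




abbreviation "Unif \<equiv> uniform_measure lborel {0<..<(1::real)}"

lemma Unif_prob: "prob_space Unif"
  by (rule prob_space_uniform_measure) auto

lemma Unif_density: "Unif = density lborel (\<lambda>x. ennreal (indicator {0<..<1} x))"
  unfolding uniform_measure_def by (simp add: ennreal_indicator divide_ennreal_def)

lemma Unif_AE: "AE t in Unif. t \<in> {0<..<1}"
  by (rule AE_uniform_measureI) auto

lemma Unif_mean: "(\<integral>t. t \<partial>Unif) = 1 / 2"
proof -
  have "(\<integral>t. t \<partial>Unif) = (\<integral>x. indicator {0<..<1} x *\<^sub>R x \<partial>lborel)"
    unfolding Unif_density by (rule integral_density) auto
  also have "\<dots> = (\<integral>x. x ^ 1 * indicator {0..1} x \<partial>lborel)"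
  proof (rule integral_cong_AE)
    show "AE x in lborel. indicator {0<..<1} x *\<^sub>R x = x ^ 1 * indicator {0..1::real} x"
      using AE_lborel_singleton[of 0] AE_lborel_singleton[of 1]
      by eventually_elim (auto simp: indicator_def)
  qed auto
  also have "\<dots> = 1 / 2" by (subst integral_power) auto
  finally show ?thesis .
qed

lemma norm_div_sqrt:
  assumes "0 < \<alpha>" shows "(norm (u /\<^sub>R (h / sqrt \<alpha>)))\<^sup>2 = \<alpha> * (norm (u /\<^sub>R h))\<^sup>2"
proof -
  have "(h / sqrt \<alpha>)\<^sup>2 = h\<^sup>2 / \<alpha>" using assms by (simp add: power_divide)
  then show ?thesis unfolding norm_div_sq by simp
qed

lemma jensen_step:
  fixes Z :: "nat \<Rightarrow> 'a::euclidean_space"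
  assumes P: "is_profile k kp" and hm: "0 < hmin" "hmin < hmax" and h: "hmin \<le> h" "h \<le> hmax"
    and \<nu>: "0 \<le> \<nu>"
  defines "\<delta> \<equiv> min \<nu> (min ((h / hmin)\<^sup>2 - 1) (1 - (h / hmax)\<^sup>2))"
  shows "Lh k n h Z \<le> (\<integral>t. Lh k n (h / sqrt (1 + \<delta> * (2 * t - 1))) Z \<partial>Unif)"
proof -
  interpret U: prob_space Unif by (rule Unif_prob)
  define c where "c a b = (norm ((Z a - Z b) /\<^sub>R h))\<^sup>2" for a b
  define q where "q \<alpha> = (\<Sum>a<n. \<Sum>b\<in>{a..<n}. k (max 0 (\<alpha> * c a b)))" for \<alpha>
  define X where "X t = 1 + \<delta> * (2 * t - 1)" for t
  have h0: "0 < h" using hm h by simp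
  have qL: "q \<alpha> = Lh k n (h / sqrt \<alpha>) Z" if "0 < \<alpha>" for \<alpha>
    unfolding q_def Lh_def Kern_def c_def norm_div_sqrt[OF that] using that by simp
  have q1: "q 1 = Lh k n h Z" using qL[of 1] by simp
  have Xpos: "AE t in Unif. X t \<in> {0<..}"
    using Unif_AE
  proof eventually_elim
    fix t assume t: "t \<in> {0<..<(1::real)}"
    have "(h / hmax)\<^sup>2 \<le> X t" unfolding X_def \<delta>_def
      by (rule step_range(3)[OF hm h \<nu>]) (use t in auto)
    moreover have "0 < (h / hmax)\<^sup>2" using h0 hm by simp
    ultimately have "0 < X t" by (meson less_le_trans)
    then show "X t \<in> {0<..}" by simp
  qed
  have d01: "0 \<le> \<delta>" "\<delta> < 1" unfolding \<delta>_def using step_range(1,2)[OF hm h \<nu>, of 0] by auto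
  have Xb: "AE t in Unif. norm (X t) \<le> 2"
    using Unif_AE
  proof eventually_elim
    fix t assume t: "t \<in> {0<..<(1::real)}"
    have "\<bar>\<delta> * (2 * t - 1)\<bar> \<le> 1 * 1" unfolding abs_mult
      using d01 t by (intro mult_mono) auto
    then show "norm (X t) \<le> 2" unfolding X_def by simp
  qed
  have Xm[measurable]: "X \<in> borel_measurable Unif" unfolding X_def by simp
  have tb: "AE t in Unif. norm t \<le> (1::real)" using Unif_AE by eventually_elim auto
  have intt: "integrable Unif (\<lambda>t. t)" by (rule U.integrable_const_bound[OF tb]) simp
  have EX: "U.expectation X = 1"
  proof -
    have "U.expectation X = (\<integral>t. 1 + (2 * \<delta>) * t - \<delta> \<partial>Unif)"
      unfolding X_def by (simp add: algebra_simps)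
    also have "\<dots> = 1 + (2 * \<delta>) * U.expectation (\<lambda>t. t) - \<delta>"
      using intt by (simp add: U.prob_space)
    also have "\<dots> = 1" using Unif_mean by simp
    finally show ?thesis .
  qed
  have km[measurable]: "(\<lambda>t. k (max 0 t)) \<in> borel_measurable borel" by (rule k_meas[OF P])
  have qm: "(\<lambda>t. q (X t)) \<in> borel_measurable Unif" unfolding q_def by measurable
  have qb: "AE t in Unif. norm (q (X t)) \<le> real n * real n * k 0"
  proof (rule AE_I2)
    fix t
    have K: "\<And>s. 0 \<le> k (max 0 s) \<and> k (max 0 s) \<le> k 0" using k_bounds[OF P] by simp
    have "q (X t) \<le> (\<Sum>a<n. \<Sum>b<n. k (max 0 (X t * c a b)))"
      unfolding q_def using K by (intro sum_mono sum_mono2) auto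
    also have "\<dots> \<le> (\<Sum>a<n. \<Sum>b<n. k 0)" using K by (intro sum_mono) auto
    finally have "q (X t) \<le> real n * real n * k 0" by simp
    moreover have "0 \<le> q (X t)" unfolding q_def using K by (intro sum_nonneg) auto
    ultimately show "norm (q (X t)) \<le> real n * real n * k 0" by simp
  qed
  have intq: "integrable Unif (\<lambda>t. q (X t))" by (rule U.integrable_const_bound[OF qb qm])
  have intX: "integrable Unif X" by (rule U.integrable_const_bound[OF Xb Xm])
  have cvq: "convex_on {0<..} q"
    unfolding q_def
    by (intro convex_on_sumf convex_k_scale[OF P]) (auto simp: c_def)
  have J: "q (U.expectation X) \<le> U.expectation (\<lambda>t. q (X t))"
    by (rule U.jensens_inequality[OF intX Xpos _ intq cvq, of 0]) simp
  have "U.expectation (\<lambda>t. q (X t)) = (\<integral>t. Lh k n (h / sqrt (1 + \<delta> * (2 * t - 1))) Z \<partial>Unif)"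
  proof (rule integral_cong_AE)
    show "(\<lambda>t. q (X t)) \<in> borel_measurable Unif" by (rule qm)
    show "(\<lambda>t. Lh k n (h / sqrt (1 + \<delta> * (2 * t - 1))) Z) \<in> borel_measurable Unif"
      by (rule meas_Lh[OF P]) auto
    show "AE t in Unif. q (X t) = Lh k n (h / sqrt (1 + \<delta> * (2 * t - 1))) Z"
      using Xpos by eventually_elim (simp add: qL X_def)
  qed
  then show ?thesis using J EX q1 by simp
qed




locale dsms_setting = prob_space M
  for M :: "'w measure"
  and V :: "nat \<Rightarrow> 'w \<Rightarrow> real \<times> nat"
  and k kp :: "real \<Rightarrow> real"
  and n :: nat
  and hmin hmax h1 :: real
  and nu :: "nat \<Rightarrow> real"
  and X0 :: "nat \<Rightarrow> 'a::euclidean_space" +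
  assumes P: "is_profile k kp"
    and n1: "n \<ge> 1"
    and hmin0: "0 < hmin" and hminmax: "hmin < hmax"
    and h1a: "hmin \<le> h1" and h1b: "h1 \<le> hmax"
    and nu0: "\<And>j. nu j \<ge> 0"
    and Vm: "\<And>j. V j \<in> measurable M (borel \<Otimes>\<^sub>M count_space {..<n})"
    and Vd: "\<And>j. distr M (borel \<Otimes>\<^sub>M count_space {..<n}) (V j)
               = uniform_measure lborel {0<..<1} \<Otimes>\<^sub>M uniform_count_measure {..<n}"
    and ind: "indep_vars (\<lambda>_. borel \<Otimes>\<^sub>M count_space {..<n}) V UNIV"
begin

abbreviation "S \<equiv> (borel :: real measure) \<Otimes>\<^sub>M count_space {..<n}"

definition "HS \<omega> = dsms_h hmin hmax nu h1 (\<lambda>j. fst (V j \<omega>))"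
definition "XS \<omega> = dsms_X kp n (HS \<omega>) (\<lambda>j. snd (V j \<omega>)) X0"
definition "A m \<omega> = Lh k n (HS \<omega> m) (XS \<omega> m)"
definition "B m \<omega> = Lh k n (HS \<omega> m) (XS \<omega> (Suc m))"
definition "good \<omega> \<longleftrightarrow> (\<forall>j. fst (V j \<omega>) \<in> {0<..<1})"

lemma snd_meas: "snd \<in> measurable S (count_space UNIV)"
proof -
  have "snd \<in> measurable S (count_space {..<n})" by (rule measurable_snd)
  moreover have "(\<lambda>x. x) \<in> measurable (count_space {..<n}) (count_space (UNIV::nat set))" by simp
  ultimately have "(\<lambda>x. x) \<circ> snd \<in> measurable S (count_space (UNIV::nat set))" by (rule measurable_comp)
  then show ?thesis by (simp add: comp_def)
qed

lemma Vfst[measurable]: "(\<lambda>\<omega>. fst (V j \<omega>)) \<in> borel_measurable M"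
  using measurable_compose[OF Vm measurable_fst] by simp

lemma Vsnd: "(\<lambda>\<omega>. snd (V j \<omega>)) \<in> measurable M (count_space UNIV)"
  using measurable_compose[OF Vm snd_meas] by simp

lemma Vsnd_lt: "\<omega> \<in> space M \<Longrightarrow> snd (V j \<omega>) < n"
proof -
  assume "\<omega> \<in> space M"
  then have "V j \<omega> \<in> space S" by (rule measurable_space[OF Vm])
  then show ?thesis by (auto simp: space_pair_measure mem_Times_iff)
qed

lemma HS_meas[measurable]: "(\<lambda>\<omega>. HS \<omega> m) \<in> borel_measurable M"
  unfolding HS_def by (rule meas_dsms_h) simp

lemma XS_meas[measurable]: "(\<lambda>\<omega>. XS \<omega> m i) \<in> borel_measurable M"
  unfolding XS_def by (rule meas_dsms_X[OF P]) (auto simp: HS_def[symmetric] Vsnd)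

lemma A_meas[measurable]: "A m \<in> borel_measurable M"
  unfolding A_def by (rule meas_Lh[OF P]) auto

lemma B_meas[measurable]: "B m \<in> borel_measurable M"
  unfolding B_def by (rule meas_Lh[OF P]) auto

lemma A_bnd: "0 \<le> A m \<omega>" "A m \<omega> \<le> real n * real n * k 0"
  unfolding A_def using Lh_bounds[OF P] by auto

lemma B_bnd: "0 \<le> B m \<omega>" "B m \<omega> \<le> real n * real n * k 0"
  unfolding B_def using Lh_bounds[OF P] by auto

lemma A_int: "integrable M (A m)"
  by (rule integrable_const_bound[where B="real n * real n * k 0"]) (use A_bnd in auto)

lemma B_int: "integrable M (B m)"
  by (rule integrable_const_bound[where B="real n * real n * k 0"]) (use B_bnd in auto)

lemma distU: "distr M borel (\<lambda>\<omega>. fst (V j \<omega>)) = Unif"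
proof -
  have z: "0 \<in> {..<n}" using n1 by simp
  have fin: "finite {..<n}" "{..<n} \<noteq> {}" using z by auto
  interpret UC: prob_space "uniform_count_measure {..<n}"
    by (rule prob_space_uniform_count_measure[OF fin])
  have "distr M borel (\<lambda>\<omega>. fst (V j \<omega>)) = distr M borel (fst \<circ> V j)" by (simp add: comp_def)
  also have "\<dots> = distr (distr M S (V j)) borel fst"
    by (rule distr_distr[symmetric, OF measurable_fst Vm])
  also have "\<dots> = distr (Unif \<Otimes>\<^sub>M uniform_count_measure {..<n}) Unif fst"
    unfolding Vd by (rule distr_cong) (simp_all add: sets_uniform_measure)
  also have "\<dots> = Unif" by (rule UC.distr_pair_fst)
  finally show ?thesis .
qed

lemma good_AE: "AE \<omega> in M. good \<omega>"
proof -
  have "\<And>j. AE \<omega> in M. fst (V j \<omega>) \<in> {0<..<1}"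
  proof -
    fix j
    have "AE t in distr M borel (\<lambda>\<omega>. fst (V j \<omega>)). t \<in> {0<..<1}"
      unfolding distU by (rule Unif_AE)
    then show "AE \<omega> in M. fst (V j \<omega>) \<in> {0<..<1}"
      by (rule AE_distrD[OF Vfst])
  qed
  then show ?thesis unfolding good_def by (simp add: AE_all_countable)
qed

lemma HS_range: "good \<omega> \<Longrightarrow> hmin \<le> HS \<omega> m \<and> HS \<omega> m \<le> hmax"
  unfolding HS_def good_def
  by (rule hs_range[OF hmin0 hminmax h1a h1b nu0]) (auto simp: less_imp_le)


lemma key_step: "(\<integral>\<omega>. B m \<omega> \<partial>M) \<le> (\<integral>\<omega>. A (Suc m) \<omega> \<partial>M)"
proof -
  define C0 where "C0 = real n * real n * k 0"
  define PW where "PW = PiM {..m} (\<lambda>_. S)"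
  define W where "W = (\<lambda>\<omega>. restrict (\<lambda>j. V j \<omega>) {..m})"
  define U where "U = (\<lambda>\<omega>. fst (V (Suc m) \<omega>))"
  define HSw where "HSw = (\<lambda>w :: nat \<Rightarrow> real \<times> nat. dsms_h hmin hmax nu h1 (\<lambda>j. fst (w j)))"
  define XSw where "XSw = (\<lambda>w. dsms_X kp n (HSw w) (\<lambda>j. snd (w j)) X0 (Suc m))"
  define hc where "hc = (\<lambda>w. max hmin (min hmax (HSw w m)))"
  define dl where "dl = (\<lambda>w. min (nu (Suc m)) (min ((hc w / hmin)\<^sup>2 - 1) (1 - (hc w / hmax)\<^sup>2)))"
  define gw where "gw = (\<lambda>w. Lh k n (hc w) (XSw w))"
  define fw where "fw = (\<lambda>p. Lh k n (hc (fst p) / sqrt (1 + dl (fst p) * (2 * snd p - 1))) (XSw (fst p)))"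
  have Wm[measurable]: "W \<in> measurable M PW" unfolding W_def PW_def by (intro measurable_restrict Vm)
  have Um[measurable]: "U \<in> borel_measurable M" unfolding U_def by simp
  have cc: "(\<lambda>w. w j) \<in> measurable PW S" if "j \<le> m" for j
    unfolding PW_def by (rule measurable_component_singleton) (use that in simp)
  have cf: "(\<lambda>w. fst (w j)) \<in> borel_measurable PW" if "j \<le> m" for j
    using measurable_compose[OF cc[OF that] measurable_fst] by simp
  have cs: "(\<lambda>w. snd (w j)) \<in> measurable PW (count_space UNIV)" if "j \<le> m" for j
    using measurable_compose[OF cc[OF that] snd_meas] by simp
  have HSwm: "(\<lambda>w. HSw w j) \<in> borel_measurable PW" if "j \<le> m" for j
    unfolding HSw_def by (rule meas_dsms_h) (use that cf in auto)
  have XSwm[measurable]: "(\<lambda>w. XSw w i) \<in> borel_measurable PW" for i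
    unfolding XSw_def by (rule meas_dsms_X[OF P]) (auto intro: HSwm cs)
  have HSwm'[measurable]: "(\<lambda>w. HSw w m) \<in> borel_measurable PW" by (rule HSwm) simp
  have hcm[measurable]: "hc \<in> borel_measurable PW" unfolding hc_def by measurable
  have dlm[measurable]: "dl \<in> borel_measurable PW" unfolding dl_def by measurable
  have gwm[measurable]: "gw \<in> borel_measurable PW" unfolding gw_def by (rule meas_Lh[OF P]) auto
  have fwm[measurable]: "fw \<in> borel_measurable (PW \<Otimes>\<^sub>M borel)"
    unfolding fw_def by (rule meas_Lh[OF P]) measurable
  have hc_rng: "hmin \<le> hc w" "hc w \<le> hmax" for w using hminmax by (auto simp: hc_def)
  have gw_bnd: "0 \<le> gw w \<and> gw w \<le> C0" for w unfolding gw_def C0_def using Lh_bounds[OF P] by auto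
  have fw_bnd: "0 \<le> fw p \<and> fw p \<le> C0" for p unfolding fw_def C0_def using Lh_bounds[OF P] by auto
  have i1: "indep_var PW W (PiM {Suc m} (\<lambda>_. S)) (\<lambda>\<omega>. restrict (\<lambda>j. V j \<omega>) {Suc m})"
    unfolding PW_def W_def by (rule indep_var_restrict[OF ind]) auto
  have c1: "(\<lambda>x. x (Suc m)) \<in> measurable (PiM {Suc m} (\<lambda>_. S)) S"
    by (rule measurable_component_singleton) simp
  have c2: "(\<lambda>x. fst (x (Suc m))) \<in> borel_measurable (PiM {Suc m} (\<lambda>_. S))"
    using measurable_compose[OF c1 measurable_fst] by simp
  define PU where "PU = PiM {Suc m} (\<lambda>_. S)"
  define U' where "U' = (\<lambda>\<omega>. restrict (\<lambda>j. V j \<omega>) {Suc m})"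
  define fw' where "fw' = (\<lambda>p :: (nat \<Rightarrow> real \<times> nat) \<times> (nat \<Rightarrow> real \<times> nat). fw (fst p, fst (snd p (Suc m))))"
  have U'm[measurable]: "U' \<in> measurable M PU" unfolding U'_def PU_def by (intro measurable_restrict Vm)
  have c2': "(\<lambda>x. fst (x (Suc m))) \<in> borel_measurable PU" using c2 by (simp add: PU_def)
  have fw'm[measurable]: "fw' \<in> borel_measurable (PW \<Otimes>\<^sub>M PU)"
  proof -
    have "(\<lambda>p. (fst p, fst (snd p (Suc m)))) \<in> measurable (PW \<Otimes>\<^sub>M PU) (PW \<Otimes>\<^sub>M borel)"
      using c2' by measurable
    from measurable_compose[OF this fwm] show ?thesis by (simp add: fw'_def)
  qed
  have fw'_bnd: "0 \<le> fw' p \<and> fw' p \<le> C0" for p unfolding fw'_def using fw_bnd by simp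
  have i3: "indep_var PW W PU U'" using i1 by (simp add: PU_def U'_def)
  have jd: "distr M PW W \<Otimes>\<^sub>M distr M PU U' = distr M (PW \<Otimes>\<^sub>M PU) (\<lambda>\<omega>. (W \<omega>, U' \<omega>))"
    using i3 unfolding indep_var_distribution_eq by simp
  have dU: "distr M borel U = Unif" unfolding U_def by (rule distU)
  interpret PWd: prob_space "distr M PW W" by (rule prob_space_distr[OF Wm])
  interpret PUd: prob_space "distr M PU U'" by (rule prob_space_distr[OF U'm])
  interpret pp: pair_prob_space "distr M PW W" "distr M PU U'" by unfold_locales
  have WUm: "(\<lambda>\<omega>. (W \<omega>, U' \<omega>)) \<in> measurable M (PW \<Otimes>\<^sub>M PU)" by measurable
  have fwint: "integrable (distr M PW W \<Otimes>\<^sub>M distr M PU U') fw'"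
    unfolding jd
    by (subst integrable_distr_eq[OF WUm fw'm], rule integrable_const_bound[where B=C0])
       (use fw'_bnd measurable_compose[OF WUm fw'm] in auto)
  have gwint: "integrable (distr M PW W) gw"
    by (subst integrable_distr_eq[OF Wm gwm], rule integrable_const_bound[where B=C0])
       (use gw_bnd in auto)
  have inner: "(\<integral>x. fw' (w, x) \<partial>distr M PU U') = (\<integral>t. fw (w, t) \<partial>Unif)" for w
  proof -
    have m1: "(\<lambda>x. fw' (w, x)) \<in> borel_measurable PU"
      unfolding fw'_def fw_def using c2' by (intro meas_Lh[OF P]) auto
    have m2: "(\<lambda>t. fw (w, t)) \<in> borel_measurable borel"
      unfolding fw_def by (rule meas_Lh[OF P]) auto
    have "(\<integral>x. fw' (w, x) \<partial>distr M PU U') = (\<integral>\<omega>. fw' (w, U' \<omega>) \<partial>M)" by (rule integral_distr[OF U'm m1])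
    also have "\<dots> = (\<integral>\<omega>. fw (w, U \<omega>) \<partial>M)" by (simp add: fw'_def U'_def U_def)
    also have "\<dots> = (\<integral>t. fw (w, t) \<partial>distr M borel U)" by (rule integral_distr[OF Um m2, symmetric])
    finally show ?thesis unfolding dU .
  qed
  have ident: "B m \<omega> = gw (W \<omega>) \<and> A (Suc m) \<omega> = fw (W \<omega>, U \<omega>)" if \<omega>: "\<omega> \<in> space M" "good \<omega>" for \<omega>
  proof -
    have hs_eq: "HS \<omega> j = HSw (W \<omega>) j" if "j \<le> m" for j
      unfolding HS_def HSw_def W_def by (rule dsms_h_cong) (use that in auto)
    have xs_eq: "XS \<omega> (Suc m) = XSw (W \<omega>)"
      unfolding XS_def XSw_def by (rule dsms_X_cong) (auto simp: hs_eq W_def)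
    have hr: "hmin \<le> HS \<omega> m \<and> HS \<omega> m \<le> hmax" by (rule HS_range[OF \<omega>(2)])
    have hc_eq: "hc (W \<omega>) = HS \<omega> m" using hr hs_eq[of m] by (simp add: hc_def)
    have B_eq: "B m \<omega> = gw (W \<omega>)" unfolding B_def gw_def xs_eq hc_eq ..
    have hsS: "HS \<omega> (Suc m) = hc (W \<omega>) / sqrt (1 + dl (W \<omega>) * (2 * U \<omega> - 1))"
      unfolding hc_eq dl_def hc_eq U_def by (simp add: HS_def Let_def)
    have A_eq: "A (Suc m) \<omega> = fw (W \<omega>, U \<omega>)" unfolding A_def fw_def hsS xs_eq by simp
    show ?thesis using B_eq A_eq by simp
  qed
  have "(\<integral>\<omega>. B m \<omega> \<partial>M) = (\<integral>\<omega>. gw (W \<omega>) \<partial>M)"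
    by (rule integral_cong_AE) (use good_AE ident in \<open>auto elim!: AE_mp\<close>)
  also have "\<dots> = integral\<^sup>L (distr M PW W) gw" by (rule integral_distr[OF Wm gwm, symmetric])
  also have "\<dots> \<le> (\<integral>w. (\<integral>x. fw' (w, x) \<partial>distr M PU U') \<partial>distr M PW W)"
  proof (rule integral_mono[OF gwint pp.integrable_fst'[OF fwint]])
    fix w
    show "gw w \<le> (\<integral>x. fw' (w, x) \<partial>distr M PU U')"
      unfolding inner gw_def fw_def dl_def fst_conv snd_conv
      by (rule jensen_step[OF P hmin0 hminmax hc_rng nu0])
  qed
  also have "\<dots> = integral\<^sup>L (distr M PW W \<Otimes>\<^sub>M distr M PU U') fw'" by (rule pp.integral_fst'[OF fwint])
  also have "\<dots> = (\<integral>\<omega>. fw' (W \<omega>, U' \<omega>) \<partial>M)" unfolding jd by (rule integral_distr[OF WUm fw'm])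
  also have "\<dots> = (\<integral>\<omega>. fw (W \<omega>, U \<omega>) \<partial>M)" by (simp add: fw'_def U'_def U_def)
  also have "\<dots> = (\<integral>\<omega>. A (Suc m) \<omega> \<partial>M)"
    by (rule integral_cong_AE) (use good_AE ident in \<open>auto elim!: AE_mp\<close>)
  finally show ?thesis .
qed


lemma XS_Suc: "XS \<omega> (Suc m) = (XS \<omega> m)(snd (V m \<omega>) := mean_shift kp n (HS \<omega> m) (XS \<omega> m) (XS \<omega> m (snd (V m \<omega>))))"
  by (simp add: XS_def Let_def)

definition "cc = 4 * real n * (- kp 0) / hmin\<^sup>2"

lemma gain_good:
  assumes \<omega>: "\<omega> \<in> space M" "good \<omega>"
  shows "0 \<le> B m \<omega> - A m \<omega>"
    and "(norm (gradL kp n (HS \<omega> m) (XS \<omega> m) (snd (V m \<omega>))))\<^sup>2 \<le> cc * (B m \<omega> - A m \<omega>)"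
proof -
  have i: "snd (V m \<omega>) < n" by (rule Vsnd_lt[OF \<omega>(1)])
  have hr: "hmin \<le> HS \<omega> m \<and> HS \<omega> m \<le> hmax" by (rule HS_range[OF \<omega>(2)])
  then have h0: "HS \<omega> m \<noteq> 0" using hmin0 by auto
  note gb = grad_bound[OF P i h0, where X="XS \<omega> m"]
  have BA: "B m \<omega> - A m \<omega> = Lh k n (HS \<omega> m) ((XS \<omega> m)(snd (V m \<omega>) := mean_shift kp n (HS \<omega> m) (XS \<omega> m) (XS \<omega> m (snd (V m \<omega>))))) - Lh k n (HS \<omega> m) (XS \<omega> m)"
    unfolding A_def B_def XS_Suc ..
  show D0: "0 \<le> B m \<omega> - A m \<omega>" unfolding BA by (rule gb(2))
  have kp0: "0 \<le> - kp 0" using kp_nonpos[OF P, of 0] by simp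
  have "hmin\<^sup>2 \<le> (HS \<omega> m)\<^sup>2" using hr hmin0 by (intro power_mono) auto
  moreover have "0 \<le> 4 * real n * (- kp 0)" using kp0 by (simp add: mult_nonneg_nonpos)
  moreover have "0 < (HS \<omega> m)\<^sup>2 * hmin\<^sup>2" using hr hmin0 by (intro mult_pos_pos) auto
  ultimately have "4 * real n * (- kp 0) / (HS \<omega> m)\<^sup>2 \<le> cc"
    unfolding cc_def by (rule divide_left_mono)
  then have "(4 * real n * (- kp 0) / (HS \<omega> m)\<^sup>2) * (B m \<omega> - A m \<omega>) \<le> cc * (B m \<omega> - A m \<omega>)"
    using D0 by (rule mult_right_mono)
  then show "(norm (gradL kp n (HS \<omega> m) (XS \<omega> m) (snd (V m \<omega>))))\<^sup>2 \<le> cc * (B m \<omega> - A m \<omega>)"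
    using gb(1) unfolding BA[symmetric] by linarith
qed

lemma D_tendsto: "AE \<omega> in M. (\<lambda>m. B m \<omega> - A m \<omega>) \<longlonglongrightarrow> 0"
proof -
  define C0 where "C0 = real n * real n * k 0"
  define D where "D = (\<lambda>m \<omega>. B m \<omega> - A m \<omega>)"
  define E where "E = (\<lambda>m \<omega>. max 0 (D m \<omega>))"
  have Dm[measurable]: "D m \<in> borel_measurable M" for m unfolding D_def by measurable
  have Em[measurable]: "E m \<in> borel_measurable M" for m unfolding E_def by measurable
  have intD: "integrable M (D m)" for m unfolding D_def by (intro Bochner_Integration.integrable_diff B_int A_int)
  have DAE: "AE \<omega> in M. \<forall>m. 0 \<le> D m \<omega>"
    using good_AE AE_space
  proof eventually_elim
    fix \<omega> assume "good \<omega>" "\<omega> \<in> space M"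
    then show "\<forall>m. 0 \<le> D m \<omega>" unfolding D_def using gain_good(1) by blast
  qed
  have iD: "(\<integral>\<omega>. D m \<omega> \<partial>M) = (\<integral>\<omega>. B m \<omega> \<partial>M) - (\<integral>\<omega>. A m \<omega> \<partial>M)" for m
    unfolding D_def by (rule Bochner_Integration.integral_diff[OF B_int A_int])
  have tele: "(\<Sum>m<N. (\<integral>\<omega>. D m \<omega> \<partial>M)) \<le> (\<integral>\<omega>. A N \<omega> \<partial>M) - (\<integral>\<omega>. A 0 \<omega> \<partial>M)" for N
  proof (induction N)
    case (Suc N)
    have "(\<Sum>m<Suc N. (\<integral>\<omega>. D m \<omega> \<partial>M)) = (\<Sum>m<N. (\<integral>\<omega>. D m \<omega> \<partial>M)) + (\<integral>\<omega>. B N \<omega> \<partial>M) - (\<integral>\<omega>. A N \<omega> \<partial>M)"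
      by (simp add: iD)
    also have "\<dots> \<le> (\<integral>\<omega>. B N \<omega> \<partial>M) - (\<integral>\<omega>. A 0 \<omega> \<partial>M)" using Suc by simp
    also have "\<dots> \<le> (\<integral>\<omega>. A (Suc N) \<omega> \<partial>M) - (\<integral>\<omega>. A 0 \<omega> \<partial>M)" using key_step[of N] by simp
    finally show ?case .
  qed simp
  have AN: "(\<integral>\<omega>. A N \<omega> \<partial>M) \<le> C0" for N
  proof -
    have "(\<integral>\<omega>. A N \<omega> \<partial>M) \<le> (\<integral>\<omega>. C0 \<partial>M)"
      by (rule integral_mono[OF A_int]) (auto simp: C0_def A_bnd)
    then show ?thesis by (simp add: prob_space)
  qed
  have A0: "0 \<le> (\<integral>\<omega>. A 0 \<omega> \<partial>M)" by (rule integral_nonneg_AE) (simp add: A_bnd)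
  have sb: "(\<Sum>m<N. (\<integral>\<omega>. D m \<omega> \<partial>M)) \<le> C0" for N using tele[of N] AN[of N] A0 by linarith
  have iD0: "0 \<le> (\<integral>\<omega>. D m \<omega> \<partial>M)" for m
    by (rule integral_nonneg_AE) (use DAE in auto)
  have sum_int: "summable (\<lambda>m. (\<integral>\<omega>. D m \<omega> \<partial>M))"
    by (rule summableI_nonneg_bounded[OF iD0 sb])
  have nnE: "(\<integral>\<^sup>+\<omega>. ennreal (E m \<omega>) \<partial>M) = ennreal (\<integral>\<omega>. D m \<omega> \<partial>M)" for m
  proof -
    have "(\<integral>\<^sup>+\<omega>. ennreal (E m \<omega>) \<partial>M) = (\<integral>\<^sup>+\<omega>. ennreal (D m \<omega>) \<partial>M)"
      by (rule nn_integral_cong_AE) (use DAE in \<open>auto simp: E_def\<close>)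
    also have "\<dots> = ennreal (\<integral>\<omega>. D m \<omega> \<partial>M)"
      by (rule nn_integral_eq_integral[OF intD]) (use DAE in auto)
    finally show ?thesis .
  qed
  have "(\<integral>\<^sup>+\<omega>. (\<Sum>m. ennreal (E m \<omega>)) \<partial>M) = (\<Sum>m. (\<integral>\<^sup>+\<omega>. ennreal (E m \<omega>) \<partial>M))"
    by (rule nn_integral_suminf) simp
  also have "\<dots> = (\<Sum>m. ennreal (\<integral>\<omega>. D m \<omega> \<partial>M))" by (simp add: nnE)
  also have "\<dots> = ennreal (\<Sum>m. (\<integral>\<omega>. D m \<omega> \<partial>M))" by (rule suminf_ennreal2[OF iD0 sum_int])
  finally have fin: "(\<integral>\<^sup>+\<omega>. (\<Sum>m. ennreal (E m \<omega>)) \<partial>M) \<noteq> \<infinity>" by simp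
  have "AE \<omega> in M. (\<Sum>m. ennreal (E m \<omega>)) \<noteq> \<infinity>"
    by (rule nn_integral_PInf_AE[OF _ fin]) simp
  then show ?thesis using DAE
  proof eventually_elim
    fix \<omega> assume f: "(\<Sum>m. ennreal (E m \<omega>)) \<noteq> \<infinity>" and d: "\<forall>m. 0 \<le> D m \<omega>"
    have "summable (\<lambda>m. E m \<omega>)"
      by (rule summable_suminf_not_top) (use f in \<open>auto simp: E_def\<close>)
    then have "(\<lambda>m. E m \<omega>) \<longlonglongrightarrow> 0" by (rule summable_LIMSEQ_zero)
    moreover have "\<And>m. E m \<omega> = B m \<omega> - A m \<omega>" using d by (simp add: E_def D_def)
    ultimately show "(\<lambda>m. B m \<omega> - A m \<omega>) \<longlonglongrightarrow> 0" by simp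
  qed
qed

lemma main:
  "AE \<omega> in M. \<exists>g :: nat \<Rightarrow> 'a.
     (\<forall>j. GDERIV (\<lambda>y. Lh k n (HS \<omega> j) ((XS \<omega> j)(snd (V j \<omega>) := y))) (XS \<omega> j (snd (V j \<omega>))) :> g j)
     \<and> g \<longlonglongrightarrow> 0"
  using good_AE D_tendsto AE_space
proof eventually_elim
  fix \<omega> assume g: "good \<omega>" and t: "(\<lambda>m. B m \<omega> - A m \<omega>) \<longlonglongrightarrow> 0" and s: "\<omega> \<in> space M"
  define gg where "gg j = gradL kp n (HS \<omega> j) (XS \<omega> j) (snd (V j \<omega>))" for j
  have GD: "\<forall>j. GDERIV (\<lambda>y. Lh k n (HS \<omega> j) ((XS \<omega> j)(snd (V j \<omega>) := y))) (XS \<omega> j (snd (V j \<omega>))) :> gg j"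
    unfolding gg_def using Lh_gderiv[OF P Vsnd_lt[OF s]] by blast
  have bnd: "norm (gg j) \<le> sqrt (cc * (B j \<omega> - A j \<omega>))" for j
    unfolding gg_def by (rule real_le_rsqrt) (rule gain_good(2)[OF s g])
  have "(\<lambda>j. cc * (B j \<omega> - A j \<omega>)) \<longlonglongrightarrow> cc * 0" by (rule tendsto_mult[OF tendsto_const t])
  then have "(\<lambda>j. sqrt (cc * (B j \<omega> - A j \<omega>))) \<longlonglongrightarrow> sqrt (cc * 0)" by (rule tendsto_real_sqrt)
  then have "(\<lambda>j. sqrt (cc * (B j \<omega> - A j \<omega>))) \<longlonglongrightarrow> 0" by simp
  then have "gg \<longlonglongrightarrow> 0" by (rule Lim_null_comparison[OF always_eventually[OF allI[OF bnd]]])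
  then show "\<exists>g :: nat \<Rightarrow> 'a.
     (\<forall>j. GDERIV (\<lambda>y. Lh k n (HS \<omega> j) ((XS \<omega> j)(snd (V j \<omega>) := y))) (XS \<omega> j (snd (V j \<omega>))) :> g j)
     \<and> g \<longlonglongrightarrow> 0" using GD by blast
qed

end

theorem corollary1:
  fixes M :: "'w measure"
    and V :: "nat \<Rightarrow> 'w \<Rightarrow> real \<times> nat"
    and k kp :: "real \<Rightarrow> real"
    and n :: nat
    and hmin hmax h1 :: real
    and nu :: "nat \<Rightarrow> real"
    and X0 :: "nat \<Rightarrow> 'a::euclidean_space"
  assumes "prob_space M"
    and "is_profile k kp"
    and "n \<ge> 1"
    and "0 < hmin" "hmin < hmax"
    and "hmin \<le> h1" "h1 \<le> hmax"
    and "\<And>j. nu j \<ge> 0" "nu \<longlonglongrightarrow> 0"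
    and "\<And>j. V j \<in> measurable M (borel \<Otimes>\<^sub>M count_space {..<n})"
    and "\<And>j. distr M (borel \<Otimes>\<^sub>M count_space {..<n}) (V j)
               = uniform_measure lborel {0<..<1} \<Otimes>\<^sub>M uniform_count_measure {..<n}"
    and "prob_space.indep_vars M (\<lambda>_. borel \<Otimes>\<^sub>M count_space {..<n}) V UNIV"
  shows "AE \<omega> in M.
           (let u = (\<lambda>j. fst (V j \<omega>)); idx = (\<lambda>j. snd (V j \<omega>));
                hs = dsms_h hmin hmax nu h1 u;
                Xs = dsms_X kp n hs idx X0
            in \<exists>g :: nat \<Rightarrow> 'a.
                 (\<forall>j. GDERIV (\<lambda>y. Lh k n (hs j) ((Xs j)(idx j := y))) (Xs j (idx j)) :> g j)
                 \<and> g \<longlonglongrightarrow> 0)"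
proof -
  interpret dsms_setting M V k kp n hmin hmax h1 nu X0
  proof (rule dsms_setting.intro[OF assms(1)], rule dsms_setting_axioms.intro)
  qed (fact assms)+
  show ?thesis using main unfolding HS_def XS_def Let_def .
qed


end
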